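(* Let $X$ be a complex Banach space, $\mathcal{F}$ and $\mathcal{G}$ algebras with unit, $\eta:\mathcal{G}\to\mathcal{F}$ a unital algebra homomorphism, and $\Phi:\mathcal{F}\to\mathcal{C}(X)$, $\Psi:\mathcal{G}\to\mathcal{C}(X)$ proto-calculi. Let $\mathcal{E}$ be an algebraic core for $\Psi$ such that $\Phi(\eta(e))=\Psi(e)$ for all $e\in\mathcal{E}$. Then the following are equivalent: (i) $\Phi\circ\eta=\Psi$; (ii) $\eta(\mathcal{G})$ is a $\Phi$-regular subalgebra of $\mathcal{F}$; (iii) $\eta(\mathcal{E})$ is an algebraic core for the restriction of $\Phi$ to $\eta(\mathcal{G})$. Moreover, (i)–(iii) hold if $\Phi$ is a calculus and $\mathcal{F}$ is commutative.
   Context: Algebras need not be commutative. $\mathcal{L}(X)$, $\mathcal{C}(X)$: bounded, resp. closed linear operators on $X$; operator inclusions are graph inclusions, sums/products have natural domains, "$Tx=y$" means $x\in\mathrm{dom}(T)$, $Tx=y$. For a unital algebra $\mathcal{H}$, a proto-calculus is a map $\Phi:\mathcal{H}\to\mathcal{C}(X)$ with (FC1) $\Phi(\mathbf{1})=I$; (FC2) $\lambda\Phi(f)\subseteq\Phi(\lambda f)$, $\Phi(f)+\Phi(g)\subseteq\Phi(f+g)$; (FC3) $\Phi(f)\Phi(g)\subseteq\Phi(fg)$ with $\mathrm{dom}(\Phi(f)\Phi(g))=\mathrm{dom}(\Phi(g))\cap\mathrm{dom}(\Phi(fg))$. $\mathrm{bdd}(\mathcal{H},\Phi)=\{f:\Phi(f)\in\mathcal{L}(X)\}$;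 for $\mathcal{E}\subseteq\mathcal{H}$, $[f]_{\mathcal{E}}=\{e\in\mathcal{E}:ef\in\mathcal{E}\}$; $\mathrm{reg}(f,\Phi)=[f]_{\mathrm{bdd}(\mathcal{H},\Phi)}$. A subset $\mathcal{E}\subseteq\mathrm{bdd}(\mathcal{H},\Phi)$ is an algebraic core for $\Phi$ if for every $f\in\mathcal{H}$ and $x,y\in X$: $\Phi(f)x=y\iff\Phi(ef)x=\Phi(e)y$ for all $e\in[f]_{\mathcal{E}}$. A calculus is a proto-calculus for which $\mathrm{bdd}(\mathcal{H},\Phi)$ is an algebraic core. A unital subalgebra $\mathcal{H}_0$ of $\mathcal{H}$ is $\Phi$-regular if the restriction $\Phi|_{\mathcal{H}_0}$ is a calculus on $\mathcal{H}_0$. *)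

theory Defs
  imports "HOL-Analysis.Analysis"
begin

text \<open>Complex structure on a Banach space X (real Banach space given by the type
  class banach) via an explicit complex scalar multiplication sc.\<close>
definition complex_banach_scalar :: "(complex \<Rightarrow> 'x::banach \<Rightarrow> 'x) \<Rightarrow> bool" where
  "complex_banach_scalar sc \<longleftrightarrow> Vector_Spaces.vector_space sc
     \<and> (\<forall>r x. sc (complex_of_real r) x = r *\<^sub>R x)
     \<and> (\<forall>c x. norm (sc c x) = cmod c * norm x)"

definition complex_algebra :: "(complex \<Rightarrow> 'f::{ring,monoid_mult} \<Rightarrow> 'f) \<Rightarrow> bool" where
  "complex_algebra scF \<longleftrightarrow> Vector_Spaces.vector_space scF
     \<and> (\<forall>c a b. scF c (a * b) = scF c a * b \<and> scF c (a * b) = a * scF c b)"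

definition unital_alg_hom ::
  "(complex \<Rightarrow> 'g::{ring,monoid_mult} \<Rightarrow> 'g) \<Rightarrow> (complex \<Rightarrow> 'f::{ring,monoid_mult} \<Rightarrow> 'f)
   \<Rightarrow> ('g \<Rightarrow> 'f) \<Rightarrow> bool" where
  "unital_alg_hom scG scF \<eta> \<longleftrightarrow> \<eta> 1 = 1
     \<and> (\<forall>a b. \<eta> (a + b) = \<eta> a + \<eta> b \<and> \<eta> (a * b) = \<eta> a * \<eta> b)
     \<and> (\<forall>c a. \<eta> (scG c a) = scF c (\<eta> a))"

definition unital_subalgebra :: "(complex \<Rightarrow> 'f::{ring,monoid_mult} \<Rightarrow> 'f) \<Rightarrow> 'f set \<Rightarrow> bool" where
  "unital_subalgebra scF H \<longleftrightarrow> 1 \<in> H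
     \<and> (\<forall>a\<in>H. \<forall>b\<in>H. a + b \<in> H \<and> a * b \<in> H) \<and> (\<forall>c. \<forall>a\<in>H. scF c a \<in> H)"

text \<open>Linear operators on X are represented by their graphs; "T x = y" is (x,y) \<in> T.\<close>
type_synonym 'x op = "('x \<times> 'x) set"

definition op_dom :: "'x op \<Rightarrow> 'x set" where
  "op_dom T = {x. \<exists>y. (x, y) \<in> T}"

definition linear_op :: "(complex \<Rightarrow> 'x::banach \<Rightarrow> 'x) \<Rightarrow> 'x op \<Rightarrow> bool" where
  "linear_op sc T \<longleftrightarrow> (\<forall>x y y'. (x, y) \<in> T \<longrightarrow> (x, y') \<in> T \<longrightarrow> y = y')
     \<and> (0, 0) \<in> T
     \<and> (\<forall>x y x' y'. (x, y) \<in> T \<longrightarrow> (x', y') \<in> T \<longrightarrow> (x + x', y + y') \<in> T)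
     \<and> (\<forall>c x y. (x, y) \<in> T \<longrightarrow> (sc c x, sc c y) \<in> T)"

definition closed_op :: "(complex \<Rightarrow> 'x::banach \<Rightarrow> 'x) \<Rightarrow> 'x op \<Rightarrow> bool" where
  "closed_op sc T \<longleftrightarrow> linear_op sc T \<and> closed T"

definition bounded_op :: "(complex \<Rightarrow> 'x::banach \<Rightarrow> 'x) \<Rightarrow> 'x op \<Rightarrow> bool" where
  "bounded_op sc T \<longleftrightarrow> linear_op sc T \<and> op_dom T = UNIV
     \<and> (\<exists>C. \<forall>x y. (x, y) \<in> T \<longrightarrow> norm y \<le> C * norm x)"

definition op_id :: "'x op" where
  "op_id = {(x, x) | x. True}"

definition op_scale :: "(complex \<Rightarrow> 'x \<Rightarrow> 'x) \<Rightarrow> complex \<Rightarrow> 'x op \<Rightarrow> 'x op" where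
  "op_scale sc c T = {(x, sc c y) | x y. (x, y) \<in> T}"

definition op_plus :: "'x::plus op \<Rightarrow> 'x op \<Rightarrow> 'x op" where
  "op_plus S T = {(x, y + z) | x y z. (x, y) \<in> S \<and> (x, z) \<in> T}"

text \<open>op_comp S T is the product ST (first T, then S), with natural domain.\<close>
definition op_comp :: "'x op \<Rightarrow> 'x op \<Rightarrow> 'x op" where
  "op_comp S T = {(x, z) | x y z. (x, y) \<in> T \<and> (y, z) \<in> S}"

text \<open>Proto-calculus on a unital (sub)algebra with carrier H; the restriction of
  \<Phi> to a subalgebra H0 is \<Phi> considered on carrier H0.\<close>
definition proto_calculus ::
  "(complex \<Rightarrow> 'x::banach \<Rightarrow> 'x) \<Rightarrow> (complex \<Rightarrow> 'f::{ring,monoid_mult} \<Rightarrow> 'f) \<Rightarrow> 'f set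
   \<Rightarrow> ('f \<Rightarrow> 'x op) \<Rightarrow> bool" where
  "proto_calculus sc scF H \<Phi> \<longleftrightarrow>
     (\<forall>f\<in>H. closed_op sc (\<Phi> f))
     \<and> \<Phi> 1 = op_id
     \<and> (\<forall>f\<in>H. \<forall>c. op_scale sc c (\<Phi> f) \<subseteq> \<Phi> (scF c f))
     \<and> (\<forall>f\<in>H. \<forall>g\<in>H. op_plus (\<Phi> f) (\<Phi> g) \<subseteq> \<Phi> (f + g))
     \<and> (\<forall>f\<in>H. \<forall>g\<in>H. op_comp (\<Phi> f) (\<Phi> g) \<subseteq> \<Phi> (f * g)
          \<and> op_dom (op_comp (\<Phi> f) (\<Phi> g)) = op_dom (\<Phi> g) \<inter> op_dom (\<Phi> (f * g)))"

definition bdd :: "(complex \<Rightarrow> 'x::banach \<Rightarrow> 'x) \<Rightarrow> 'f set \<Rightarrow> ('f \<Rightarrow> 'x op) \<Rightarrow> 'f set" where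
  "bdd sc H \<Phi> = {f \<in> H. bounded_op sc (\<Phi> f)}"

definition reg_set :: "'f::times set \<Rightarrow> 'f \<Rightarrow> 'f set" where
  "reg_set E f = {e \<in> E. e * f \<in> E}"

definition alg_core ::
  "(complex \<Rightarrow> 'x::banach \<Rightarrow> 'x) \<Rightarrow> 'f::times set \<Rightarrow> ('f \<Rightarrow> 'x op) \<Rightarrow> 'f set \<Rightarrow> bool" where
  "alg_core sc H \<Phi> E \<longleftrightarrow> E \<subseteq> bdd sc H \<Phi>
     \<and> (\<forall>f\<in>H. \<forall>x y. (x, y) \<in> \<Phi> f \<longleftrightarrow>
          (\<forall>e\<in>reg_set E f. \<exists>z. (y, z) \<in> \<Phi> e \<and> (x, z) \<in> \<Phi> (e * f)))"

definition calculus ::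
  "(complex \<Rightarrow> 'x::banach \<Rightarrow> 'x) \<Rightarrow> (complex \<Rightarrow> 'f::{ring,monoid_mult} \<Rightarrow> 'f) \<Rightarrow> 'f set
   \<Rightarrow> ('f \<Rightarrow> 'x op) \<Rightarrow> bool" where
  "calculus sc scF H \<Phi> \<longleftrightarrow> proto_calculus sc scF H \<Phi> \<and> alg_core sc H \<Phi> (bdd sc H \<Phi>)"

definition regular_subalgebra ::
  "(complex \<Rightarrow> 'x::banach \<Rightarrow> 'x) \<Rightarrow> (complex \<Rightarrow> 'f::{ring,monoid_mult} \<Rightarrow> 'f) \<Rightarrow> ('f \<Rightarrow> 'x op)
   \<Rightarrow> 'f set \<Rightarrow> bool" where
  "regular_subalgebra sc scF \<Phi> H0 \<longleftrightarrow> unital_subalgebra scF H0 \<and> calculus sc scF H0 \<Phi>"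

end

theory Submission
  imports Defs
begin

lemma bdd_ex: "bounded_op sc T \<Longrightarrow> \<exists>y. (x, y) \<in> T"
  by (auto simp: bounded_op_def op_dom_def)

lemma lin_sv: "linear_op sc T \<Longrightarrow> (x, y) \<in> T \<Longrightarrow> (x, y') \<in> T \<Longrightarrow> y = y'"
  by (simp add: linear_op_def)

lemma lin_zero: "linear_op sc T \<Longrightarrow> (0, 0) \<in> T"
  by (simp add: linear_op_def)

lemma lin_diff:
  assumes X: "complex_banach_scalar sc" and T: "linear_op sc T"
    and "(u, a) \<in> T" "(v, b) \<in> T"
  shows "(u - v, a - b) \<in> T"
proof -
  have neg: "sc (complex_of_real (-1)) z = - z" for z
  proof -
    have "sc (complex_of_real (-1)) z = (-1) *\<^sub>R z"
      using X unfolding complex_banach_scalar_def by blast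
    thus ?thesis by simp
  qed
  have "(sc (complex_of_real (-1)) v, sc (complex_of_real (-1)) b) \<in> T"
    using T assms(4) unfolding linear_op_def by blast
  hence "(- v, - b) \<in> T" by (simp only: neg)
  hence "(u + - v, a + - b) \<in> T" using T assms(3) unfolding linear_op_def by blast
  thus ?thesis by simp
qed

lemma proto_comp:
  assumes "proto_calculus sc scF H \<Phi>" "f \<in> H" "g \<in> H" "(x, u) \<in> \<Phi> g" "(u, v) \<in> \<Phi> f"
  shows "(x, v) \<in> \<Phi> (f * g)"
proof -
  have "(x, v) \<in> op_comp (\<Phi> f) (\<Phi> g)" using assms(4,5) unfolding op_comp_def by blast
  thus ?thesis using assms(1-3) unfolding proto_calculus_def by blast
qed

lemma proto_lin: "proto_calculus sc scF H \<Phi> \<Longrightarrow> f \<in> H \<Longrightarrow> linear_op sc (\<Phi> f)"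
  unfolding proto_calculus_def closed_op_def by blast

lemma core_fwd:
  assumes P: "proto_calculus sc scF H \<Phi>" and e: "e \<in> bdd sc H \<Phi>" and f: "f \<in> H"
    and xy: "(x, y) \<in> \<Phi> f"
  shows "\<exists>z. (y, z) \<in> \<Phi> e \<and> (x, z) \<in> \<Phi> (e * f)"
proof -
  from e have eH: "e \<in> H" and b: "bounded_op sc (\<Phi> e)" by (auto simp: bdd_def)
  obtain z where z: "(y, z) \<in> \<Phi> e" using bdd_ex[OF b] by blast
  have "(x, z) \<in> \<Phi> (e * f)" using proto_comp[OF P eH f xy z] .
  thus ?thesis using z by blast
qed

lemma core_mono:
  assumes P: "proto_calculus sc scF H \<Phi>" and C: "alg_core sc H \<Phi> E1"
    and sub: "E1 \<subseteq> E2" and E2: "E2 \<subseteq> bdd sc H \<Phi>"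
  shows "alg_core sc H \<Phi> E2"
  unfolding alg_core_def
proof (intro conjI E2 ballI allI iffI)
  fix f x y e assume f: "f \<in> H" and xy: "(x, y) \<in> \<Phi> f" and "e \<in> reg_set E2 f"
    hence "e \<in> bdd sc H \<Phi>" using E2 by (auto simp: reg_set_def)
    thus "\<exists>z. (y, z) \<in> \<Phi> e \<and> (x, z) \<in> \<Phi> (e * f)" using core_fwd[OF P _ f xy] by blast
next
  fix f x y assume f: "f \<in> H"
    and R: "\<forall>e\<in>reg_set E2 f. \<exists>z. (y, z) \<in> \<Phi> e \<and> (x, z) \<in> \<Phi> (e * f)"
  have "reg_set E1 f \<subseteq> reg_set E2 f" using sub by (auto simp: reg_set_def)
  hence "\<forall>e\<in>reg_set E1 f. \<exists>z. (y, z) \<in> \<Phi> e \<and> (x, z) \<in> \<Phi> (e * f)" using R by blast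
  thus "(x, y) \<in> \<Phi> f" using C f unfolding alg_core_def by blast
qed

theorem theorem5p8:
  fixes sc :: "complex \<Rightarrow> 'x::banach \<Rightarrow> 'x"
    and scF :: "complex \<Rightarrow> 'f::{ring,monoid_mult} \<Rightarrow> 'f"
    and scG :: "complex \<Rightarrow> 'g::{ring,monoid_mult} \<Rightarrow> 'g"
    and \<eta> :: "'g \<Rightarrow> 'f"
    and \<Phi> :: "'f \<Rightarrow> 'x op" and \<Psi> :: "'g \<Rightarrow> 'x op"
    and E :: "'g set"
  assumes X: "complex_banach_scalar sc"
    and F: "complex_algebra scF" and G: "complex_algebra scG"
    and eta: "unital_alg_hom scG scF \<eta>"
    and Phi: "proto_calculus sc scF UNIV \<Phi>"
    and Psi: "proto_calculus sc scG UNIV \<Psi>"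
    and core: "alg_core sc UNIV \<Psi> E"
    and agree: "\<forall>e\<in>E. \<Phi> (\<eta> e) = \<Psi> e"
  shows "(\<Phi> \<circ> \<eta> = \<Psi> \<longleftrightarrow> regular_subalgebra sc scF \<Phi> (range \<eta>))
       \<and> (regular_subalgebra sc scF \<Phi> (range \<eta>) \<longleftrightarrow> alg_core sc (range \<eta>) \<Phi> (\<eta> ` E))
       \<and> (calculus sc scF UNIV \<Phi> \<and> (\<forall>a b :: 'f. a * b = b * a) \<longrightarrow> \<Phi> \<circ> \<eta> = \<Psi>)"
proof -
  have e1: "\<eta> 1 = 1" and emul: "\<And>a b. \<eta> (a * b) = \<eta> a * \<eta> b"
    and eadd: "\<And>a b. \<eta> (a + b) = \<eta> a + \<eta> b"
    and esc: "\<And>c a. \<eta> (scG c a) = scF c (\<eta> a)"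
    using eta unfolding unital_alg_hom_def by auto
  have Pcomp: "\<And>f g x u v. (x, u) \<in> \<Phi> g \<Longrightarrow> (u, v) \<in> \<Phi> f \<Longrightarrow> (x, v) \<in> \<Phi> (f * g)"
    using proto_comp[OF Phi] by blast
  have Qcomp: "\<And>f g x u v. (x, u) \<in> \<Psi> g \<Longrightarrow> (u, v) \<in> \<Psi> f \<Longrightarrow> (x, v) \<in> \<Psi> (f * g)"
    using proto_comp[OF Psi] by blast
  have Plin: "\<And>f. linear_op sc (\<Phi> f)" using proto_lin[OF Phi] by blast
  have Qlin: "\<And>f. linear_op sc (\<Psi> f)" using proto_lin[OF Psi] by blast
  have Ebdd: "\<And>e. e \<in> E \<Longrightarrow> bounded_op sc (\<Psi> e)"
    using core unfolding alg_core_def bdd_def by blast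
  have coreQ: "\<And>g x y. (x, y) \<in> \<Psi> g \<longleftrightarrow>
      (\<forall>e\<in>reg_set E g. \<exists>z. (y, z) \<in> \<Psi> e \<and> (x, z) \<in> \<Psi> (e * g))"
    using core unfolding alg_core_def by blast
  have sub: "(x, y) \<in> \<Psi> g" if xy: "(x, y) \<in> \<Phi> (\<eta> g)" for x y g
  proof -
    have "\<forall>e\<in>reg_set E g. \<exists>z. (y, z) \<in> \<Psi> e \<and> (x, z) \<in> \<Psi> (e * g)"
    proof
      fix e assume "e \<in> reg_set E g"
      hence eE: "e \<in> E" "e * g \<in> E" by (auto simp: reg_set_def)
      obtain z where z: "(y, z) \<in> \<Psi> e" using bdd_ex[OF Ebdd[OF eE(1)]] by blast
      hence "(y, z) \<in> \<Phi> (\<eta> e)" using agree eE by simp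
      hence "(x, z) \<in> \<Phi> (\<eta> e * \<eta> g)" using Pcomp xy by blast
      hence "(x, z) \<in> \<Psi> (e * g)" using agree eE emul by metis
      thus "\<exists>z. (y, z) \<in> \<Psi> e \<and> (x, z) \<in> \<Psi> (e * g)" using z by blast
    qed
    thus ?thesis using coreQ by blast
  qed
  have beq: "\<Phi> (\<eta> h) = \<Psi> h" if b: "bounded_op sc (\<Phi> (\<eta> h))" for h
  proof
    show "\<Phi> (\<eta> h) \<subseteq> \<Psi> h" using sub by auto
    show "\<Psi> h \<subseteq> \<Phi> (\<eta> h)"
    proof
      fix p assume p: "p \<in> \<Psi> h"
      obtain x w where pw: "p = (x, w)" by (cases p)
      obtain w' where w': "(x, w') \<in> \<Phi> (\<eta> h)" using bdd_ex[OF b] by blast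
      have "(x, w') \<in> \<Psi> h" using sub w' by blast
      hence "w = w'" using lin_sv[OF Qlin] p pw by blast
      thus "p \<in> \<Phi> (\<eta> h)" using pw w' by simp
    qed
  qed
  have proto_r: "proto_calculus sc scF (range \<eta>) \<Phi>"
    using Phi unfolding proto_calculus_def by blast
  have usub: "unital_subalgebra scF (range \<eta>)"
    unfolding unital_subalgebra_def
  proof (intro conjI ballI allI)
    show "1 \<in> range \<eta>" using e1 by (metis rangeI)
  next
    fix a b assume "a \<in> range \<eta>" "b \<in> range \<eta>"
    then obtain a' b' where "a = \<eta> a'" "b = \<eta> b'" by blast
    thus "a + b \<in> range \<eta>" "a * b \<in> range \<eta>" using eadd emul by (metis rangeI)+
  next
    fix c a assume "a \<in> range \<eta>"
    then obtain a' where "a = \<eta> a'" by blast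
    thus "scF c a \<in> range \<eta>" using esc by (metis rangeI)
  qed
  have i_iii: "alg_core sc (range \<eta>) \<Phi> (\<eta> ` E)" if i: "\<Phi> \<circ> \<eta> = \<Psi>"
  proof -
    have eq: "\<And>g. \<Phi> (\<eta> g) = \<Psi> g" using i by (simp add: fun_eq_iff)
    have Es: "\<eta> ` E \<subseteq> bdd sc (range \<eta>) \<Phi>" using Ebdd eq by (auto simp: bdd_def)
    show ?thesis unfolding alg_core_def
    proof (intro conjI Es ballI allI iffI)
      fix f x y e assume f: "f \<in> range \<eta>" and xy: "(x, y) \<in> \<Phi> f" and "e \<in> reg_set (\<eta> ` E) f"
        hence "e \<in> bdd sc (range \<eta>) \<Phi>" using Es by (auto simp: reg_set_def)
        thus "\<exists>z. (y, z) \<in> \<Phi> e \<and> (x, z) \<in> \<Phi> (e * f)" using core_fwd[OF proto_r _ f xy] by blast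
    next
      fix f x y assume f: "f \<in> range \<eta>"
        and R: "\<forall>e\<in>reg_set (\<eta> ` E) f. \<exists>z. (y, z) \<in> \<Phi> e \<and> (x, z) \<in> \<Phi> (e * f)"
      obtain g where g: "f = \<eta> g" using f by blast
      have "\<forall>e\<in>reg_set E g. \<exists>z. (y, z) \<in> \<Psi> e \<and> (x, z) \<in> \<Psi> (e * g)"
      proof
        fix e assume "e \<in> reg_set E g"
        hence eE: "e \<in> E" "e * g \<in> E" by (auto simp: reg_set_def)
        have "\<eta> e * f = \<eta> (e * g)" using g emul by simp
        hence "\<eta> e \<in> reg_set (\<eta> ` E) f" using eE by (auto simp: reg_set_def)
        then obtain z where "(y, z) \<in> \<Phi> (\<eta> e)" "(x, z) \<in> \<Phi> (\<eta> e * \<eta> g)" using R g by blast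
        thus "\<exists>z. (y, z) \<in> \<Psi> e \<and> (x, z) \<in> \<Psi> (e * g)" using eq emul by metis
      qed
      thus "(x, y) \<in> \<Phi> f" using coreQ eq g by blast
    qed
  qed
  have iii_ii: "regular_subalgebra sc scF \<Phi> (range \<eta>)" if iii: "alg_core sc (range \<eta>) \<Phi> (\<eta> ` E)"
  proof -
    have "\<eta> ` E \<subseteq> bdd sc (range \<eta>) \<Phi>" using iii unfolding alg_core_def by blast
    hence "alg_core sc (range \<eta>) \<Phi> (bdd sc (range \<eta>) \<Phi>)"
      using core_mono[OF proto_r iii] by blast
    thus ?thesis using usub proto_r unfolding regular_subalgebra_def calculus_def by blast
  qed
  have ii_i: "\<Phi> \<circ> \<eta> = \<Psi>" if ii: "regular_subalgebra sc scF \<Phi> (range \<eta>)"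
  proof (rule ext)
    fix g
    have C: "alg_core sc (range \<eta>) \<Phi> (bdd sc (range \<eta>) \<Phi>)"
      using ii unfolding regular_subalgebra_def calculus_def by blast
    have "\<Phi> (\<eta> g) = \<Psi> g"
    proof
      show "\<Phi> (\<eta> g) \<subseteq> \<Psi> g" using sub by auto
      show "\<Psi> g \<subseteq> \<Phi> (\<eta> g)"
      proof
        fix p assume p: "p \<in> \<Psi> g"
        obtain x y where pw: "p = (x, y)" by (cases p)
        have "\<forall>h\<in>reg_set (bdd sc (range \<eta>) \<Phi>) (\<eta> g). \<exists>z. (y, z) \<in> \<Phi> h \<and> (x, z) \<in> \<Phi> (h * \<eta> g)"
        proof
          fix h assume h: "h \<in> reg_set (bdd sc (range \<eta>) \<Phi>) (\<eta> g)"
          then obtain a where a: "h = \<eta> a" by (auto simp: reg_set_def bdd_def)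
          have b1: "bounded_op sc (\<Phi> (\<eta> a))" and b2: "bounded_op sc (\<Phi> (\<eta> (a * g)))"
            using h a emul by (auto simp: reg_set_def bdd_def)
          have q1: "\<Phi> (\<eta> a) = \<Psi> a" and q2: "\<Phi> (\<eta> (a * g)) = \<Psi> (a * g)"
            using beq b1 b2 by auto
          obtain z where z: "(y, z) \<in> \<Psi> a" using bdd_ex b1 q1 by metis
          have "(x, z) \<in> \<Psi> (a * g)" using Qcomp p pw z by blast
          thus "\<exists>z. (y, z) \<in> \<Phi> h \<and> (x, z) \<in> \<Phi> (h * \<eta> g)" using z q1 q2 a emul by metis
        qed
        thus "p \<in> \<Phi> (\<eta> g)" using C pw unfolding alg_core_def by blast
      qed
    qed
    thus "(\<Phi> \<circ> \<eta>) g = \<Psi> g" by simp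
  qed
  have mo: "\<Phi> \<circ> \<eta> = \<Psi>" if calc: "calculus sc scF UNIV \<Phi>" and comm: "\<forall>a b :: 'f. a * b = b * a"
  proof (rule ext)
    fix g
    have C: "alg_core sc UNIV \<Phi> (bdd sc UNIV \<Phi>)" using calc unfolding calculus_def by blast
    have "\<Phi> (\<eta> g) = \<Psi> g"
    proof
      show "\<Phi> (\<eta> g) \<subseteq> \<Psi> g" using sub by auto
      show "\<Psi> g \<subseteq> \<Phi> (\<eta> g)"
      proof
        fix p assume p: "p \<in> \<Psi> g"
        obtain x y where pw: "p = (x, y)" by (cases p)
        have xy: "(x, y) \<in> \<Psi> g" using p pw by simp
        have "\<forall>e\<in>reg_set (bdd sc UNIV \<Phi>) (\<eta> g). \<exists>z. (y, z) \<in> \<Phi> e \<and> (x, z) \<in> \<Phi> (e * \<eta> g)"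
        proof
          fix e assume e: "e \<in> reg_set (bdd sc UNIV \<Phi>) (\<eta> g)"
          have b1: "bounded_op sc (\<Phi> e)" and b2: "bounded_op sc (\<Phi> (e * \<eta> g))"
            using e by (auto simp: reg_set_def bdd_def)
          obtain w1 where w1: "(x, w1) \<in> \<Phi> (e * \<eta> g)" using bdd_ex[OF b2] by blast
          obtain w2 where w2: "(y, w2) \<in> \<Phi> e" using bdd_ex[OF b1] by blast
          have D: "\<forall>d\<in>reg_set E g. \<exists>z. (w1 - w2, z) \<in> \<Psi> d \<and> (0, z) \<in> \<Psi> (d * g)"
          proof
            fix d assume "d \<in> reg_set E g"
            hence dE: "d \<in> E" "d * g \<in> E" by (auto simp: reg_set_def)
            have bd: "bounded_op sc (\<Phi> (\<eta> d))" using agree dE Ebdd by simp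
            have qd: "\<Phi> (\<eta> d) = \<Psi> d" using agree dE by simp
            have qdg: "\<Phi> (\<eta> d * \<eta> g) = \<Psi> (d * g)" using agree dE emul by metis
            obtain a1 where a1: "(w1, a1) \<in> \<Phi> (\<eta> d)" using bdd_ex[OF bd] by blast
            have A1: "(x, a1) \<in> \<Phi> (\<eta> d * (e * \<eta> g))" using Pcomp w1 a1 by blast
            obtain v where v: "(y, v) \<in> \<Psi> d" using bdd_ex[OF Ebdd[OF dE(1)]] by blast
            have "(x, v) \<in> \<Psi> (d * g)" using Qcomp xy v by blast
            hence xv: "(x, v) \<in> \<Phi> (\<eta> d * \<eta> g)" using qdg by simp
            obtain b where b: "(v, b) \<in> \<Phi> e" using bdd_ex[OF b1] by blast
            have B1: "(x, b) \<in> \<Phi> (e * (\<eta> d * \<eta> g))" using Pcomp xv b by blast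
            have re: "e * (\<eta> d * \<eta> g) = \<eta> d * (e * \<eta> g)"
              using comm by (metis mult.assoc)
            have ab: "a1 = b" using lin_sv[OF Plin] A1 B1 re by metis
            have yb: "(y, b) \<in> \<Phi> (e * \<eta> d)" using Pcomp v qd b by blast
            obtain a2 where a2: "(w2, a2) \<in> \<Phi> (\<eta> d)" using bdd_ex[OF bd] by blast
            have "(y, a2) \<in> \<Phi> (\<eta> d * e)" using Pcomp w2 a2 by blast
            hence "(y, a2) \<in> \<Phi> (e * \<eta> d)" using comm by metis
            hence a2b: "a2 = b" using lin_sv[OF Plin] yb by metis
            have "(w1 - w2, a1 - a2) \<in> \<Phi> (\<eta> d)" using lin_diff[OF X Plin a1 a2] .
            hence "(w1 - w2, 0) \<in> \<Psi> d" using ab a2b qd by simp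
            moreover have "(0, 0) \<in> \<Psi> (d * g)" using lin_zero[OF Qlin] .
            ultimately show "\<exists>z. (w1 - w2, z) \<in> \<Psi> d \<and> (0, z) \<in> \<Psi> (d * g)" by blast
          qed
          have "(0, w1 - w2) \<in> \<Psi> g" using coreQ D by blast
          hence "w1 - w2 = 0" using lin_sv[OF Qlin] lin_zero[OF Qlin] by metis
          hence "w1 = w2" by simp
          thus "\<exists>z. (y, z) \<in> \<Phi> e \<and> (x, z) \<in> \<Phi> (e * \<eta> g)" using w1 w2 by blast
        qed
        thus "p \<in> \<Phi> (\<eta> g)" using C pw unfolding alg_core_def by blast
      qed
    qed
    thus "(\<Phi> \<circ> \<eta>) g = \<Psi> g" by simp
  qed
  show ?thesis using i_iii iii_ii ii_i mo by blast
qed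

end
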